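(* For every integer $n\ge3$, if $T$ is a uniformly random standard Young tableau of shape $(n,n,n)$, then $$\Pr(T_{1,3}=7)=\frac{5n(n+1)^2(n+2)}{9(3n-1)(3n-2)(3n-4)(3n-5)}.$$
   Context: A standard Young tableau of shape $(n,n,n)$ is a bijective filling $T$ of the cells $[a,b]$ ($1\le a\le 3$, $1\le b\le n$; row $a$, column $b$) by $\{1,\dots,3n\}$ that increases along each row and down each column. $T_{a,b}$ denotes the entry in cell $[a,b]$. *)

theory Defs
  imports "HOL-Probability.Probability"
begin

text \<open>Cells of the shape (n,n,n): row a in 1..3, column b in 1..n.\<close>
definition cells :: "nat \<Rightarrow> (nat \<times> nat) set" where
  "cells n = {1..3} \<times> {1..n}"

text \<open>Standard Young tableaux of shape (n,n,n), as functions on cells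
  (extended by 0 outside the cells, so that the set is finite).\<close>
definition syt :: "nat \<Rightarrow> (nat \<times> nat \<Rightarrow> nat) set" where
  "syt n = {T. bij_betw T (cells n) {1..3*n}
     \<and> (\<forall>c. c \<notin> cells n \<longrightarrow> T c = 0)
     \<and> (\<forall>a b b'. (a,b) \<in> cells n \<and> (a,b') \<in> cells n \<and> b < b' \<longrightarrow> T (a,b) < T (a,b'))
     \<and> (\<forall>a a' b. (a,b) \<in> cells n \<and> (a',b) \<in> cells n \<and> a < a' \<longrightarrow> T (a,b) < T (a',b))}"

end

theory Submission imports Defs begin

definition isyt :: "(nat \<times> nat) set \<Rightarrow> nat \<Rightarrow> (nat \<times> nat \<Rightarrow> nat) set" where
  "isyt S N = {T. bij_betw T S {1..N}
     \<and> (\<forall>c. c \<notin> S \<longrightarrow> T c = 0)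
     \<and> (\<forall>a b b'. (a,b) \<in> S \<and> (a,b') \<in> S \<and> b < b' \<longrightarrow> T (a,b) < T (a,b'))
     \<and> (\<forall>a a' b. (a,b) \<in> S \<and> (a',b) \<in> S \<and> a < a' \<longrightarrow> T (a,b) < T (a',b))}"

lemma syt_isyt: "syt n = isyt (cells n) (3*n)"
  unfolding syt_def isyt_def by simp

lemma finite_isyt:
  assumes "finite S" shows "finite (isyt S N)"
proof -
  have "isyt S N \<subseteq> (\<lambda>f x. if x \<in> S then f x else 0) ` (PiE S (\<lambda>_. {..N}))"
  proof
    fix T assume T: "T \<in> isyt S N"
    then have b: "bij_betw T S {1..N}" and z: "\<forall>c. c \<notin> S \<longrightarrow> T c = 0" by (auto simp: isyt_def)
    define f where "f = restrict T S"
    have "f \<in> PiE S (\<lambda>_. {..N})" using bij_betw_imp_surj_on[OF b] unfolding f_def by auto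
    moreover have "T = (\<lambda>x. if x \<in> S then f x else 0)" using z unfolding f_def by auto
    ultimately show "T \<in> (\<lambda>f x. if x \<in> S then f x else 0) ` (PiE S (\<lambda>_. {..N}))" by blast
  qed
  moreover have "finite (PiE S (\<lambda>_. {..N::nat}))" using assms by (simp add: finite_PiE)
  ultimately show ?thesis using finite_subset by blast
qed

lemma isyt_remove:
  assumes T: "T \<in> isyt S N" and x: "x \<in> S" "T x = N"
  shows "T(x:=0) \<in> isyt (S - {x}) (N-1)"
proof -
  have b: "bij_betw T S {1..N}" using T by (simp add: isyt_def)
  have N1: "N \<ge> 1" using bij_betw_imp_surj_on[OF b] x by force
  have "bij_betw T (S - {x}) ({1..N} - {N})"
    using bij_betw_DiffI[OF b, of "{x}" "{N}"] x N1 by (simp add: bij_betw_def)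
  moreover have "{1..N} - {N} = {1..N-1}" using N1 by auto
  ultimately have "bij_betw (T(x:=0)) (S - {x}) {1..N-1}"
    by (metis (no_types, lifting) DiffD2 bij_betw_cong fun_upd_other singletonI)
  then show ?thesis using T unfolding isyt_def by auto
qed

lemma isyt_add:
  assumes T: "T \<in> isyt S (N-1)" and x: "x \<notin> S" and N1: "N \<ge> 1"
    and corner: "\<forall>y\<in>S. (fst y = fst x \<longrightarrow> snd y < snd x) \<and> (snd y = snd x \<longrightarrow> fst y < fst x)"
  shows "T(x:=N) \<in> isyt (insert x S) N"
proof -
  have b: "bij_betw T S {1..N-1}" using T by (simp add: isyt_def)
  have "bij_betw (T(x:=N)) S {1..N-1}"
    using b x by (metis bij_betw_cong fun_upd_other)
  then have "bij_betw (T(x:=N)) (S \<union> {x}) ({1..N-1} \<union> {(T(x:=N)) x})"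
    by (intro notIn_Un_bij_betw) (use x N1 in auto)
  moreover have "{1..N-1} \<union> {N} = {1..N}" using N1 by auto
  ultimately have bb: "bij_betw (T(x:=N)) (insert x S) {1..N}" by simp
  have lt: "T y < N" if "y \<in> S" for y
  proof -
    have "T y \<in> {1..N-1}" using bij_betw_imp_surj_on[OF b] that by blast
    then show ?thesis using N1 by auto
  qed
  have r: "\<forall>a b b'. (a,b) \<in> S \<and> (a,b') \<in> S \<and> b < b' \<longrightarrow> T (a,b) < T (a,b')"
   and c: "\<forall>a a' b. (a,b) \<in> S \<and> (a',b) \<in> S \<and> a < a' \<longrightarrow> T (a,b) < T (a',b)"
   and z: "\<forall>c. c \<notin> S \<longrightarrow> T c = 0" using T by (auto simp: isyt_def)
  obtain x1 x2 where xx: "x = (x1,x2)" by (cases x)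
  have r2: "(T(x:=N)) (a,b) < (T(x:=N)) (a,b')" if "(a,b) \<in> insert x S" "(a,b') \<in> insert x S" "b < b'" for a b b'
  proof -
    consider "(a,b) = x" | "(a,b') = x" | "(a,b) \<noteq> x" "(a,b') \<noteq> x" by blast
    then show ?thesis
    proof cases
      case 1
      then have "(a,b') \<in> S" using that by auto
      then have "b' < b" using corner 1 by force
      then show ?thesis using that by simp
    next
      case 2
      then have "(a,b) \<in> S" using that by auto
      then show ?thesis using 2 lt x by auto
    next
      case 3
      then show ?thesis using that r by auto
    qed
  qed
  have c2: "(T(x:=N)) (a,b) < (T(x:=N)) (a',b)" if "(a,b) \<in> insert x S" "(a',b) \<in> insert x S" "a < a'" for a a' b
  proof -
    consider "(a,b) = x" | "(a',b) = x" | "(a,b) \<noteq> x" "(a',b) \<noteq> x" by blast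
    then show ?thesis
    proof cases
      case 1
      then have "(a',b) \<in> S" using that by auto
      then have "a' < a" using corner 1 by force
      then show ?thesis using that by simp
    next
      case 2
      then have "(a,b) \<in> S" using that by auto
      then show ?thesis using 2 lt x by auto
    next
      case 3
      then show ?thesis using that c by auto
    qed
  qed
  show ?thesis using bb r2 c2 z unfolding isyt_def by auto
qed

lemma isyt_max:
  assumes T: "T \<in> isyt S N" and x: "x \<in> S" "T x = N" and y: "y \<in> S"
  shows "(fst y = fst x \<longrightarrow> snd y \<le> snd x) \<and> (snd y = snd x \<longrightarrow> fst y \<le> fst x)"
proof -
  have b: "bij_betw T S {1..N}" using T by (simp add: isyt_def)
  have "T y \<in> {1..N}" using bij_betw_imp_surj_on[OF b] y by blast
  then have le: "T y \<le> N" by auto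
  have r: "\<forall>a b b'. (a,b) \<in> S \<and> (a,b') \<in> S \<and> b < b' \<longrightarrow> T (a,b) < T (a,b')"
   and c: "\<forall>a a' b. (a,b) \<in> S \<and> (a',b) \<in> S \<and> a < a' \<longrightarrow> T (a,b) < T (a',b)"
    using T by (auto simp: isyt_def)
  obtain x1 x2 y1 y2 where xx: "x = (x1,x2)" "y = (y1,y2)" by (cases x, cases y)
  show ?thesis
  proof (intro conjI impI)
    assume "fst y = fst x"
    then show "snd y \<le> snd x" using r[rule_format, of x1 x2 y2] x y le xx by (simp, linarith)
  next
    assume "snd y = snd x"
    then show "fst y \<le> fst x" using c[rule_format, of x1 x2 y1] x y le xx by (simp, linarith)
  qed
qed

lemma isyt_ex:
  assumes T: "T \<in> isyt S N" and N: "N \<ge> 1"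
  shows "\<exists>x\<in>S. T x = N"
proof -
  have b: "bij_betw T S {1..N}" using T by (simp add: isyt_def)
  have "N \<in> T ` S" using bij_betw_imp_surj_on[OF b] N by auto
  then show ?thesis by auto
qed

lemma card_isyt_corner:
  assumes x: "x \<notin> S" and N1: "N \<ge> 1"
    and corner: "\<forall>y\<in>S. (fst y = fst x \<longrightarrow> snd y < snd x) \<and> (snd y = snd x \<longrightarrow> fst y < fst x)"
  shows "card {T \<in> isyt (insert x S) N. T x = N} = card (isyt S (N-1))"
proof -
  have "bij_betw (\<lambda>T. T(x:=0)) {T \<in> isyt (insert x S) N. T x = N} (isyt S (N-1))"
  proof (rule bij_betw_byWitness[where f'="\<lambda>T. T(x:=N)"])
    show "\<forall>a\<in>{T \<in> isyt (insert x S) N. T x = N}. a(x := 0, x := N) = a" by auto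
    show "\<forall>a'\<in>isyt S (N - 1). a'(x := N, x := 0) = a'"
    proof
      fix a' assume "a' \<in> isyt S (N-1)"
      then have "a' x = 0" using x unfolding isyt_def by blast
      then show "a'(x := N, x := 0) = a'" by auto
    qed
    show "(\<lambda>T. T(x := 0)) ` {T \<in> isyt (insert x S) N. T x = N} \<subseteq> isyt S (N - 1)"
    proof
      fix U assume "U \<in> (\<lambda>T. T(x := 0)) ` {T \<in> isyt (insert x S) N. T x = N}"
      then obtain T where "T \<in> isyt (insert x S) N" "T x = N" "U = T(x:=0)" by auto
      moreover have "insert x S - {x} = S" using x by auto
      ultimately show "U \<in> isyt S (N-1)" using isyt_remove[of T "insert x S" N x] by auto
    qed
    show "(\<lambda>T. T(x := N)) ` isyt S (N - 1) \<subseteq> {T \<in> isyt (insert x S) N. T x = N}"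
      using isyt_add[OF _ x N1 corner] by auto
  qed
  then show ?thesis by (rule bij_betw_same_card)
qed

definition shp :: "nat \<Rightarrow> nat \<Rightarrow> nat \<Rightarrow> (nat \<times> nat) set" where
  "shp a b c = {(i,j). 1 \<le> j \<and> ((i=1 \<and> j\<le>a) \<or> (i=2 \<and> j\<le>b) \<or> (i=3 \<and> j\<le>c))}"

definition Y :: "nat \<Rightarrow> nat \<Rightarrow> nat \<Rightarrow> (nat \<times> nat \<Rightarrow> nat) set" where
  "Y a b c = isyt (shp a b c) (a+b+c)"

lemma finite_shp: "finite (shp a b c)"
proof -
  have "shp a b c \<subseteq> {1..3} \<times> {1..a+b+c}" unfolding shp_def by auto
  then show ?thesis using finite_subset by blast
qed

lemma finite_Y: "finite (Y a b c)"
  unfolding Y_def by (rule finite_isyt[OF finite_shp])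

lemma shp1: assumes "b < a" "c \<le> b"
  shows "shp a b c = insert (1,a) (shp (a-1) b c)" "(1,a) \<notin> shp (a-1) b c"
    "\<forall>y\<in>shp (a-1) b c. (fst y = fst (1,a) \<longrightarrow> snd y < snd (1::nat,a)) \<and> (snd y = snd (1::nat,a) \<longrightarrow> fst y < fst (1::nat,a))"
  using assms unfolding shp_def by auto

lemma shp2: assumes "c < b" "b \<le> a"
  shows "shp a b c = insert (2,b) (shp a (b-1) c)" "(2,b) \<notin> shp a (b-1) c"
    "\<forall>y\<in>shp a (b-1) c. (fst y = fst (2,b) \<longrightarrow> snd y < snd (2::nat,b)) \<and> (snd y = snd (2::nat,b) \<longrightarrow> fst y < fst (2::nat,b))"
  using assms unfolding shp_def by auto

lemma shp3: assumes "0 < c" "c \<le> b" "b \<le> a"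
  shows "shp a b c = insert (3,c) (shp a b (c-1))" "(3,c) \<notin> shp a b (c-1)"
    "\<forall>y\<in>shp a b (c-1). (fst y = fst (3,c) \<longrightarrow> snd y < snd (3::nat,c)) \<and> (snd y = snd (3::nat,c) \<longrightarrow> fst y < fst (3::nat,c))"
  using assms unfolding shp_def by auto

lemma Y_rec:
  assumes "c \<le> b" "b \<le> a" "0 < a"
  shows "card (Y a b c) = (if b<a then card(Y (a-1) b c) else 0) + (if c<b then card(Y a (b-1) c) else 0)
           + (if 0<c then card (Y a b (c-1)) else 0)"
proof -
  define N where "N = a+b+c"
  define A1 where "A1 = {T \<in> Y a b c. b < a \<and> T (1,a) = N}"
  define A2 where "A2 = {T \<in> Y a b c. c < b \<and> T (2,b) = N}"
  define A3 where "A3 = {T \<in> Y a b c. 0 < c \<and> T (3,c) = N}"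
  have N1: "N \<ge> 1" using assms N_def by auto
  have cover: "Y a b c = A1 \<union> A2 \<union> A3"
  proof
    show "A1 \<union> A2 \<union> A3 \<subseteq> Y a b c" unfolding A1_def A2_def A3_def by auto
    show "Y a b c \<subseteq> A1 \<union> A2 \<union> A3"
    proof
      fix T assume T: "T \<in> Y a b c"
      then have T': "T \<in> isyt (shp a b c) N" unfolding Y_def N_def by simp
      obtain x where x: "x \<in> shp a b c" "T x = N" using isyt_ex[OF T' N1] by auto
      have mx: "\<And>y. y \<in> shp a b c \<Longrightarrow> (fst y = fst x \<longrightarrow> snd y \<le> snd x) \<and> (snd y = snd x \<longrightarrow> fst y \<le> fst x)"
        using isyt_max[OF T' x] by blast
      obtain i j where ij: "x = (i,j)" by (cases x)
      have "(i = 1 \<and> j = a \<and> b < a) \<or> (i = 2 \<and> j = b \<and> c < b) \<or> (i = 3 \<and> j = c \<and> 0 < c)"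
      proof -
        have j1: "1 \<le> j" and cs: "(i=1 \<and> j\<le>a) \<or> (i=2 \<and> j\<le>b) \<or> (i=3 \<and> j\<le>c)"
          using x(1) ij unfolding shp_def by auto
        show ?thesis
        proof (cases "i = 1")
          case True
          then have "j \<le> a" using cs by auto
          moreover have "a \<le> j" using mx[of "(1,a)"] True ij assms by (auto simp: shp_def)
          moreover have "\<not> (a \<le> b)" using mx[of "(2,j)"] True ij j1 \<open>j \<le> a\<close> by (auto simp: shp_def)
          ultimately show ?thesis using True by auto
        next
          case F1: False
          show ?thesis
          proof (cases "i = 2")
            case True
            then have "j \<le> b" using cs by auto
            moreover have "b \<le> j" using mx[of "(2,b)"] True ij assms j1 \<open>j \<le> b\<close> by (auto simp: shp_def)
            moreover have "\<not> (b \<le> c)" using mx[of "(3,j)"] True ij j1 \<open>j \<le> b\<close> by (auto simp: shp_def)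
            ultimately show ?thesis using True by auto
          next
            case False
            then have "i = 3" "j \<le> c" using cs F1 by auto
            moreover have "c \<le> j" using mx[of "(3,c)"] \<open>i = 3\<close> ij assms j1 \<open>j \<le> c\<close> by (auto simp: shp_def)
            ultimately show ?thesis using j1 by auto
          qed
        qed
      qed
      then show "T \<in> A1 \<union> A2 \<union> A3"
        using T x ij unfolding A1_def A2_def A3_def N_def by (elim disjE) simp_all
    qed
  qed
  have injT: "inj_on T (shp a b c)" if "T \<in> Y a b c" for T
    using that unfolding Y_def isyt_def bij_betw_def by auto
  have d12: "A1 \<inter> A2 = {}"
  proof (rule ccontr)
    assume "A1 \<inter> A2 \<noteq> {}"
    then obtain T where "T \<in> A1" "T \<in> A2" by blast
    then have "T \<in> Y a b c" "T (1,a) = T (2,b)" "b < a" "c < b" unfolding A1_def A2_def by auto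
    moreover have "(1,a) \<in> shp a b c" "(2,b) \<in> shp a b c" using \<open>b < a\<close> \<open>c < b\<close> unfolding shp_def by auto
    ultimately have "(1::nat,a) = (2,b)" using injT[of T] inj_onD by metis
    then show False by simp
  qed
  have d13: "(A1 \<union> A2) \<inter> A3 = {}"
  proof (rule ccontr)
    assume "(A1 \<union> A2) \<inter> A3 \<noteq> {}"
    then obtain T where "T \<in> A1 \<or> T \<in> A2" "T \<in> A3" by blast
    then have "T \<in> Y a b c" "T (1,a) = T (3,c) \<and> b < a \<or> T (2,b) = T (3,c) \<and> c < b" "0 < c"
      unfolding A1_def A2_def A3_def by auto
    moreover have "(1,a) \<in> shp a b c" "(2,b) \<in> shp a b c" "(3,c) \<in> shp a b c"
      using \<open>0 < c\<close> assms unfolding shp_def by auto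
    ultimately have "(1::nat,a) = (3,c) \<or> (2::nat,b) = (3,c)" using injT[of T] inj_onD by metis
    then show False by simp
  qed
  have fA: "finite A1" "finite A2" "finite A3" unfolding A1_def A2_def A3_def using finite_Y by auto
  have cY: "card (Y a b c) = card A1 + card A2 + card A3"
    using cover d12 d13 fA by (simp add: card_Un_disjoint)
  have c1: "card A1 = (if b<a then card(Y (a-1) b c) else 0)"
  proof (cases "b < a")
    case True
    have "A1 = {T \<in> isyt (insert (1,a) (shp (a-1) b c)) N. T (1,a) = N}"
      unfolding A1_def Y_def N_def using shp1[OF True assms(1)] True by auto
    then have "card A1 = card (isyt (shp (a-1) b c) (N-1))"
      using card_isyt_corner[OF shp1(2)[OF True assms(1)] N1 shp1(3)[OF True assms(1)]] by simp
    then show ?thesis using True unfolding Y_def N_def by simp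
  qed (simp add: A1_def)
  have c2: "card A2 = (if c<b then card(Y a (b-1) c) else 0)"
  proof (cases "c < b")
    case True
    have "A2 = {T \<in> isyt (insert (2,b) (shp a (b-1) c)) N. T (2,b) = N}"
      unfolding A2_def Y_def N_def using shp2[OF True assms(2)] True by auto
    then have "card A2 = card (isyt (shp a (b-1) c) (N-1))"
      using card_isyt_corner[OF shp2(2)[OF True assms(2)] N1 shp2(3)[OF True assms(2)]] by simp
    then show ?thesis using True unfolding Y_def N_def by simp
  qed (simp add: A2_def)
  have c3: "card A3 = (if 0<c then card(Y a b (c-1)) else 0)"
  proof (cases "0 < c")
    case True
    have "A3 = {T \<in> isyt (insert (3,c) (shp a b (c-1))) N. T (3,c) = N}"
      unfolding A3_def Y_def N_def using shp3[OF True assms(1,2)] True by auto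
    then have "card A3 = card (isyt (shp a b (c-1)) (N-1))"
      using card_isyt_corner[OF shp3(2)[OF True assms(1,2)] N1 shp3(3)[OF True assms(1,2)]] by simp
    then show ?thesis using True unfolding Y_def N_def by simp
  qed (simp add: A3_def)
  show ?thesis using cY c1 c2 c3 by simp
qed

definition Rf :: "int \<Rightarrow> int \<Rightarrow> int \<Rightarrow> int" where
  "Rf x y z = (x - y + 1) * (x - z + 2) * (y - z + 1)"

lemma Rf_id: "(x+y+z) * Rf x y z = (x+2) * Rf (x-1) y z + (y+1) * Rf x (y-1) z + z * Rf x y (z-1)"
  unfolding Rf_def by (simp add: algebra_simps)

lemma Y_card_aux:
  "\<forall>a b c. a+b+c = N \<longrightarrow> c \<le> b \<longrightarrow> b \<le> a \<longrightarrow>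
     int (card (Y a b c)) * (fact (a+2) * fact (b+1) * fact c) = fact N * Rf (int a) (int b) (int c)"
proof (induction N)
  case 0
  have "isyt {} 0 = {\<lambda>_. 0}" unfolding isyt_def by (auto simp: bij_betw_def)
  moreover have "shp 0 0 0 = {}" unfolding shp_def by auto
  ultimately show ?case by (auto simp: Y_def Rf_def)
next
  case (Suc K)
  show ?case
  proof (intro allI impI)
    fix a b c assume N: "a+b+c = Suc K" and cb: "c \<le> b" and ba: "b \<le> a"
    have a0: "0 < a" using N cb ba by auto
    define D where "D = (fact (a+2) * fact (b+1) * fact c :: int)"
    have t1: "int (if b<a then card(Y (a-1) b c) else 0) * D = int (a+2) * fact K * Rf (int a - 1) (int b) (int c)"
    proof (cases "b < a")
      case True
      have IH: "int (card (Y (a-1) b c)) * (fact (a-1+2) * fact (b+1) * fact c) = fact K * Rf (int (a-1)) (int b) (int c)"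
        using Suc.IH[rule_format, of "a-1" b c] N cb True by simp
      have "a - 1 + 2 = Suc a" using a0 by simp
      then have Dq: "D = of_nat (a+2) * (fact (a-1+2) * fact (b+1) * fact c)" unfolding D_def by (simp add: fact_Suc)
      have "int (if b<a then card(Y (a-1) b c) else 0) * D = of_nat (a+2) * (int (card (Y (a-1) b c)) * (fact (a-1+2) * fact (b+1) * fact c))"
        using True unfolding Dq by (simp add: ac_simps)
      also have "\<dots> = int (a+2) * fact K * Rf (int (a-1)) (int b) (int c)" unfolding IH by simp
      finally show ?thesis using a0 by (simp add: of_nat_diff)
    next
      case False then have "a = b" using ba by simp
      then show ?thesis by (simp add: Rf_def)
    qed
    have t2: "int (if c<b then card(Y a (b-1) c) else 0) * D = int (b+1) * fact K * Rf (int a) (int b - 1) (int c)"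
    proof (cases "c < b")
      case True
      have IH: "int (card (Y a (b-1) c)) * (fact (a+2) * fact (b-1+1) * fact c) = fact K * Rf (int a) (int (b-1)) (int c)"
        using Suc.IH[rule_format, of a "b-1" c] N ba True by simp
      have "b - 1 + 1 = b" using True by simp
      then have Dq: "D = of_nat (b+1) * (fact (a+2) * fact (b-1+1) * fact c)" unfolding D_def by (simp add: fact_Suc)
      have "int (if c<b then card(Y a (b-1) c) else 0) * D = of_nat (b+1) * (int (card (Y a (b-1) c)) * (fact (a+2) * fact (b-1+1) * fact c))"
        using True unfolding Dq by (simp add: ac_simps)
      also have "\<dots> = int (b+1) * fact K * Rf (int a) (int (b-1)) (int c)" unfolding IH by simp
      finally show ?thesis using True by (simp add: of_nat_diff)
    next
      case False then have "b = c" using cb by simp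
      then show ?thesis by (simp add: Rf_def)
    qed
    have t3: "int (if 0<c then card(Y a b (c-1)) else 0) * D = int c * fact K * Rf (int a) (int b) (int c - 1)"
    proof (cases "0 < c")
      case True
      have IH: "int (card (Y a b (c-1))) * (fact (a+2) * fact (b+1) * fact (c-1)) = fact K * Rf (int a) (int b) (int (c-1))"
        using Suc.IH[rule_format, of a b "c-1"] N ba cb True by simp
      have "fact c = (of_nat c * fact (c-1) :: int)" using True by (metis fact_nonzero fact_num_eq_if mult_eq_0_iff not_gr_zero)
      then have Dq: "D = of_nat c * (fact (a+2) * fact (b+1) * fact (c-1))" unfolding D_def by simp
      have "int (if 0<c then card(Y a b (c-1)) else 0) * D = of_nat c * (int (card (Y a b (c-1))) * (fact (a+2) * fact (b+1) * fact (c-1)))"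
        using True unfolding Dq by (simp add: ac_simps)
      also have "\<dots> = int c * fact K * Rf (int a) (int b) (int (c-1))" unfolding IH by simp
      finally show ?thesis using True by (simp add: of_nat_diff)
    next
      case False then show ?thesis by simp
    qed
    have "int (card (Y a b c)) * D = fact K * ((int a+2) * Rf (int a - 1) (int b) (int c) + (int b+1) * Rf (int a) (int b - 1) (int c) + int c * Rf (int a) (int b) (int c - 1))"
      using t1 t2 t3 Y_rec[OF cb ba a0] by (simp add: algebra_simps)
    also have "\<dots> = fact K * ((int a + int b + int c) * Rf (int a) (int b) (int c))"
      using Rf_id[of "int a" "int b" "int c"] by simp
    also have "\<dots> = fact (Suc K) * Rf (int a) (int b) (int c)"
      using N by (simp add: fact_Suc of_nat_add[symmetric] del: of_nat_add)
    finally show "int (card (Y a b c)) * (fact (a+2) * fact (b+1) * fact c) = fact (Suc K) * Rf (int a) (int b) (int c)"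
      unfolding D_def .
  qed
qed

lemma Y_card: "c \<le> b \<Longrightarrow> b \<le> a \<Longrightarrow>
     int (card (Y a b c)) * (fact (a+2) * fact (b+1) * fact c) = fact (a+b+c) * Rf (int a) (int b) (int c)"
  using Y_card_aux by blast

lemma cells_shp: "cells k = shp k k k"
  unfolding cells_def shp_def by auto

lemma card_cells: "card (cells k) = 3*k"
  unfolding cells_def by (simp add: card_cartesian_product)

lemma isyt_cells_mono:
  assumes T: "T \<in> isyt (cells k) N" and "(i,j) \<in> cells k" "(i',j') \<in> cells k" "i \<le> i'" "j \<le> j'"
  shows "T (i,j) \<le> T (i',j')"
proof -
  have r: "\<forall>a b b'. (a,b) \<in> cells k \<and> (a,b') \<in> cells k \<and> b < b' \<longrightarrow> T (a,b) < T (a,b')"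
   and c: "\<forall>a a' b. (a,b) \<in> cells k \<and> (a',b) \<in> cells k \<and> a < a' \<longrightarrow> T (a,b) < T (a',b)"
    using T by (auto simp: isyt_def)
  have m: "(i,j') \<in> cells k" using assms(2,3) unfolding cells_def by auto
  have "T (i,j) \<le> T (i,j')"
    using r[rule_format, of i j j'] assms(2) m \<open>j \<le> j'\<close> by (cases "j = j'") auto
  also have "\<dots> \<le> T (i',j')"
    using c[rule_format, of i j' i'] assms(3) m \<open>i \<le> i'\<close> by (cases "i = i'") auto
  finally show ?thesis .
qed

lemma isyt_range:
  assumes T: "T \<in> isyt S N" and "x \<in> S" shows "T x \<in> {1..N}"
  using assms unfolding isyt_def bij_betw_def by auto

lemma isyt_11:
  assumes B: "B \<in> isyt (cells k) (3*k)" and k: "k \<ge> 1"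
  shows "B (1,1) = 1"
proof -
  have "1 \<in> B ` cells k" using B k unfolding isyt_def bij_betw_def by auto
  then obtain i j where ij: "(i,j) \<in> cells k" "B (i,j) = 1" by auto
  have c11: "(1,1) \<in> cells k" using k unfolding cells_def by auto
  have "B (1,1) \<le> B (i,j)"
    by (rule isyt_cells_mono[OF B c11 ij(1)]) (use ij(1) in \<open>auto simp: cells_def\<close>)
  moreover have "B (1,1) \<ge> 1" using isyt_range[OF B c11] by auto
  ultimately show ?thesis using ij by auto
qed

definition Lt :: "(nat\<times>nat\<Rightarrow>nat) \<Rightarrow> (nat\<times>nat\<Rightarrow>nat)" where
  "Lt T = (\<lambda>x. if snd x \<le> 2 then T x else 0)"
definition Rt :: "nat \<Rightarrow> (nat\<times>nat\<Rightarrow>nat) \<Rightarrow> (nat\<times>nat\<Rightarrow>nat)" where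
  "Rt m T = (\<lambda>x. if x \<in> cells m then T (fst x, snd x + 2) - 6 else 0)"
definition Gt :: "nat \<Rightarrow> (nat\<times>nat\<Rightarrow>nat) \<Rightarrow> (nat\<times>nat\<Rightarrow>nat) \<Rightarrow> (nat\<times>nat\<Rightarrow>nat)" where
  "Gt n A B = (\<lambda>x. if snd x \<le> 2 then A x else if x \<in> cells n then B (fst x, snd x - 2) + 6 else 0)"

lemma fwd:
  assumes n: "n = m + 2" and m: "m \<ge> 1" and T: "T \<in> isyt (cells n) (3*n)" and T7: "T (1,3) = 7"
  shows "Lt T \<in> isyt (cells 2) 6" "Rt m T \<in> isyt (cells m) (3*m)"
    "Gt n (Lt T) (Rt m T) = T"
proof -
  define CR where "CR = {x \<in> cells n. 3 \<le> snd x}"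
  have b: "bij_betw T (cells n) {1..3*n}" and z: "\<forall>c. c \<notin> cells n \<longrightarrow> T c = 0"
   and r: "\<forall>a b b'. (a,b) \<in> cells n \<and> (a,b') \<in> cells n \<and> b < b' \<longrightarrow> T (a,b) < T (a,b')"
   and c: "\<forall>a a' b. (a,b) \<in> cells n \<and> (a',b) \<in> cells n \<and> a < a' \<longrightarrow> T (a,b) < T (a',b)"
    using T by (auto simp: isyt_def)
  have inj: "inj_on T (cells n)" using b by (simp add: bij_betw_def)
  have ge7: "T x \<ge> 7" if "x \<in> CR" for x
  proof -
    obtain i j where x: "x = (i,j)" by (cases x)
    have "(1,3) \<in> cells n" using n m unfolding cells_def by auto
    moreover have "(i,j) \<in> cells n" "3 \<le> j" using that x unfolding CR_def by auto
    moreover then have "1 \<le> i" unfolding cells_def by auto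
    ultimately have "T (1,3) \<le> T (i,j)" using isyt_cells_mono[OF T, of 1 3 i j] by blast
    then show ?thesis using T7 x by simp
  qed
  have cardCR: "card CR = 3*m"
  proof -
    have "CR = {1..3} \<times> {3..n}" unfolding CR_def cells_def by auto
    then show ?thesis using n by (simp add: card_cartesian_product)
  qed
  have TCR: "T ` CR = {7..3*n}"
  proof (rule card_subset_eq)
    show "finite {7..3*n}" by simp
    show "T ` CR \<subseteq> {7..3*n}"
    proof
      fix v assume "v \<in> T ` CR"
      then obtain x where x: "x \<in> CR" "v = T x" by auto
      then have "x \<in> cells n" unfolding CR_def by auto
      then have "T x \<le> 3*n" using isyt_range[OF T] by auto
      then show "v \<in> {7..3*n}" using ge7[OF x(1)] x by auto
    qed
    have "inj_on T CR" using inj unfolding CR_def by (rule inj_on_subset) auto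
    then show "card (T ` CR) = card {7..3*n}" using cardCR n by (simp add: card_image)
  qed
  have splt: "cells n = cells 2 \<union> CR" "cells 2 \<inter> CR = {}" "cells 2 = cells n - CR"
  proof -
    show "cells n = cells 2 \<union> CR"
    proof (intro equalityI subsetI)
      fix x assume "x \<in> cells n" then show "x \<in> cells 2 \<union> CR"
        unfolding CR_def cells_def by (cases x) auto
    next
      fix x assume "x \<in> cells 2 \<union> CR" then show "x \<in> cells n"
        unfolding CR_def cells_def using n by (cases x) auto
    qed
    show "cells 2 \<inter> CR = {}" unfolding CR_def cells_def by auto
    then show "cells 2 = cells n - CR" using \<open>cells n = cells 2 \<union> CR\<close> by blast
  qed
  have TCL: "T ` cells 2 = {1..6}"
  proof -
    have "T ` cells n = {1..3*n}" using b by (simp add: bij_betw_def)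
    moreover have "T ` cells 2 = T ` cells n - T ` CR"
      unfolding splt(3) by (rule inj_on_image_set_diff[OF inj]) (auto simp: CR_def)
    ultimately have "T ` cells 2 = {1..3*n} - {7..3*n}" using TCR by simp
    also have "\<dots> = {1..6}" using n by auto
    finally show ?thesis .
  qed
  have c2n: "cells 2 \<subseteq> cells n" using splt by auto
  show "Lt T \<in> isyt (cells 2) 6"
  proof -
    have e: "\<And>x. x \<in> cells 2 \<Longrightarrow> Lt T x = T x" unfolding Lt_def cells_def by auto
    have "bij_betw T (cells 2) {1..6}" using inj_on_subset[OF inj c2n] TCL by (simp add: bij_betw_def)
    then have "bij_betw (Lt T) (cells 2) {1..6}" using e bij_betw_cong by metis
    moreover have "\<forall>x. x \<notin> cells 2 \<longrightarrow> Lt T x = 0"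
    proof (intro allI impI)
      fix x assume "x \<notin> cells 2"
      then have "snd x \<le> 2 \<longrightarrow> x \<notin> cells n" unfolding cells_def by auto
      then show "Lt T x = 0" using z unfolding Lt_def by (cases x) auto
    qed
    moreover have "\<forall>a b b'. (a,b) \<in> cells 2 \<and> (a,b') \<in> cells 2 \<and> b < b' \<longrightarrow> Lt T (a,b) < Lt T (a,b')"
      using r c2n e by auto
    moreover have "\<forall>a a' b. (a,b) \<in> cells 2 \<and> (a',b) \<in> cells 2 \<and> a < a' \<longrightarrow> Lt T (a,b) < Lt T (a',b)"
      using c c2n e by auto
    ultimately show ?thesis unfolding isyt_def by blast
  qed
  define sh where "sh = (\<lambda>x::nat\<times>nat. (fst x, snd x + 2))"
  have shCR: "sh ` cells m = CR"
  proof
    show "sh ` cells m \<subseteq> CR" unfolding sh_def CR_def cells_def using n by auto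
    show "CR \<subseteq> sh ` cells m"
    proof
      fix x assume "x \<in> CR"
      then have "(fst x, snd x - 2) \<in> cells m" "x = sh (fst x, snd x - 2)"
        unfolding sh_def CR_def cells_def using n by auto
      then show "x \<in> sh ` cells m" by blast
    qed
  qed
  have injsh: "inj sh" unfolding sh_def inj_def by auto
  have eR: "\<And>x. x \<in> cells m \<Longrightarrow> Rt m T x = T (sh x) - 6" unfolding Rt_def sh_def by auto
  have shin: "\<And>x. x \<in> cells m \<Longrightarrow> sh x \<in> CR" using shCR by auto
  have ge7': "\<And>x. x \<in> cells m \<Longrightarrow> T (sh x) \<ge> 7" using shin ge7 by auto
  show "Rt m T \<in> isyt (cells m) (3*m)"
  proof -
    have "inj_on (Rt m T) (cells m)"
    proof (rule inj_onI)
      fix x y assume xy: "x \<in> cells m" "y \<in> cells m" "Rt m T x = Rt m T y"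
      then have "T (sh x) - 6 = T (sh y) - 6" using eR by simp
      then have "T (sh x) = T (sh y)" using ge7'[OF xy(1)] ge7'[OF xy(2)] by linarith
      moreover have "sh x \<in> cells n" "sh y \<in> cells n" using shin xy(1,2) unfolding CR_def by auto
      ultimately have "sh x = sh y" using inj_onD[OF inj] by blast
      then show "x = y" using injsh by (simp add: inj_eq)
    qed
    moreover have "Rt m T ` cells m = {1..3*m}"
    proof -
      have "Rt m T ` cells m = (\<lambda>x. T (sh x) - 6) ` cells m"
        by (rule image_cong) (simp_all add: eR)
      also have "\<dots> = (\<lambda>v. v - 6) ` (T ` (sh ` cells m))"
        by (simp add: image_image)
      also have "\<dots> = (\<lambda>v. v - 6) ` {7..3*n}" using shCR TCR by simp
      also have "\<dots> = {1..3*m}"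
      proof
        show "(\<lambda>v. v - 6) ` {7..3*n} \<subseteq> {1..3*m}" using n by auto
        show "{1..3*m} \<subseteq> (\<lambda>v. v - 6) ` {7..3*n}"
        proof
          fix w assume "w \<in> {1..3*m}"
          then have "w + 6 \<in> {7..3*n}" "w = (w+6) - 6" using n by auto
          then show "w \<in> (\<lambda>v. v - 6) ` {7..3*n}" by blast
        qed
      qed
      finally show ?thesis .
    qed
    ultimately have "bij_betw (Rt m T) (cells m) {1..3*m}" by (simp add: bij_betw_def)
    moreover have "\<forall>x. x \<notin> cells m \<longrightarrow> Rt m T x = 0" unfolding Rt_def by auto
    moreover have "\<forall>a b b'. (a,b) \<in> cells m \<and> (a,b') \<in> cells m \<and> b < b' \<longrightarrow> Rt m T (a,b) < Rt m T (a,b')"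
    proof (intro allI impI)
      fix a b b' assume h: "(a,b) \<in> cells m \<and> (a,b') \<in> cells m \<and> b < b'"
      have "sh (a,b) \<in> cells n" "sh (a,b') \<in> cells n" using shin h unfolding CR_def by auto
      then have "T (sh (a,b)) < T (sh (a,b'))" using r[rule_format, of a "b+2" "b'+2"] h unfolding sh_def by simp
      moreover have "T (sh (a,b)) \<ge> 7" using ge7' h by blast
      ultimately show "Rt m T (a,b) < Rt m T (a,b')" using eR h by simp
    qed
    moreover have "\<forall>a a' b. (a,b) \<in> cells m \<and> (a',b) \<in> cells m \<and> a < a' \<longrightarrow> Rt m T (a,b) < Rt m T (a',b)"
    proof (intro allI impI)
      fix a a' b assume h: "(a,b) \<in> cells m \<and> (a',b) \<in> cells m \<and> a < a'"
      have "sh (a,b) \<in> cells n" "sh (a',b) \<in> cells n" using shin h unfolding CR_def by auto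
      then have "T (sh (a,b)) < T (sh (a',b))" using c[rule_format, of a "b+2" a'] h unfolding sh_def by simp
      moreover have "T (sh (a,b)) \<ge> 7" using ge7' h by blast
      ultimately show "Rt m T (a,b) < Rt m T (a',b)" using eR h by simp
    qed
    ultimately show ?thesis unfolding isyt_def by blast
  qed
  show "Gt n (Lt T) (Rt m T) = T"
  proof
    fix x
    show "Gt n (Lt T) (Rt m T) x = T x"
    proof (cases "snd x \<le> 2")
      case True then show ?thesis unfolding Gt_def Lt_def by simp
    next
      case False
      show ?thesis
      proof (cases "x \<in> cells n")
        case True
        then have "x \<in> CR" "(fst x, snd x - 2) \<in> cells m" using False n unfolding CR_def cells_def by auto
        moreover have "sh (fst x, snd x - 2) = x" using False unfolding sh_def by (cases x) auto
        moreover have "T x \<ge> 7" using ge7 \<open>x \<in> CR\<close> by blast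
        ultimately show ?thesis using False True unfolding Gt_def Rt_def sh_def by simp
      next
        case F2: False then show ?thesis using False z unfolding Gt_def by (cases x) auto
      qed
    qed
  qed
qed

lemma bwd:
  assumes n: "n = m + 2" and m: "m \<ge> 1" and A: "A \<in> isyt (cells 2) 6" and B: "B \<in> isyt (cells m) (3*m)"
  shows "Gt n A B \<in> isyt (cells n) (3*n)" "Gt n A B (1,3) = 7"
    "Lt (Gt n A B) = A" "Rt m (Gt n A B) = B"
proof -
  define G where "G = Gt n A B"
  have bA: "bij_betw A (cells 2) {1..6}" and zA: "\<forall>c. c \<notin> cells 2 \<longrightarrow> A c = 0"
   and rA: "\<forall>a b b'. (a,b) \<in> cells 2 \<and> (a,b') \<in> cells 2 \<and> b < b' \<longrightarrow> A (a,b) < A (a,b')"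
   and cA: "\<forall>a a' b. (a,b) \<in> cells 2 \<and> (a',b) \<in> cells 2 \<and> a < a' \<longrightarrow> A (a,b) < A (a',b)"
    using A by (auto simp: isyt_def)
  have bB: "bij_betw B (cells m) {1..3*m}" and zB: "\<forall>c. c \<notin> cells m \<longrightarrow> B c = 0"
   and rB: "\<forall>a b b'. (a,b) \<in> cells m \<and> (a,b') \<in> cells m \<and> b < b' \<longrightarrow> B (a,b) < B (a,b')"
   and cB: "\<forall>a a' b. (a,b) \<in> cells m \<and> (a',b) \<in> cells m \<and> a < a' \<longrightarrow> B (a,b) < B (a',b)"
    using B by (auto simp: isyt_def)
  have injA: "inj_on A (cells 2)" and imA: "A ` cells 2 = {1..6}" using bA by (auto simp: bij_betw_def)
  have injB: "inj_on B (cells m)" and imB: "B ` cells m = {1..3*m}" using bB by (auto simp: bij_betw_def)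
  have c2n: "\<And>x. x \<in> cells n \<Longrightarrow> snd x \<le> 2 \<Longrightarrow> x \<in> cells 2" unfolding cells_def by auto
  have cnm: "\<And>x. x \<in> cells n \<Longrightarrow> \<not> snd x \<le> 2 \<Longrightarrow> (fst x, snd x - 2) \<in> cells m"
    unfolding cells_def using n by auto
  have eL: "\<And>x. snd x \<le> 2 \<Longrightarrow> G x = A x" unfolding G_def Gt_def by simp
  have eR: "\<And>x. x \<in> cells n \<Longrightarrow> \<not> snd x \<le> 2 \<Longrightarrow> G x = B (fst x, snd x - 2) + 6"
    unfolding G_def Gt_def by simp
  have Arng: "\<And>x. x \<in> cells 2 \<Longrightarrow> A x \<in> {1..6}" using imA by auto
  have Brng: "\<And>x. x \<in> cells m \<Longrightarrow> B x \<in> {1..3*m}" using imB by auto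
  have inj: "inj_on G (cells n)"
  proof (rule inj_onI)
    fix x y assume xy: "x \<in> cells n" "y \<in> cells n" "G x = G y"
    show "x = y"
    proof (cases "snd x \<le> 2")
      case Tx: True
      show ?thesis
      proof (cases "snd y \<le> 2")
        case True
        have "x \<in> cells 2" "y \<in> cells 2" using c2n xy(1,2) Tx True by auto
        moreover have "A x = A y" using xy(3) eL[OF Tx] eL[OF True] by simp
        ultimately show ?thesis using inj_onD[OF injA] by blast
      next
        case False
        have "A x \<in> {1..6}" using Arng c2n[OF xy(1) Tx] by blast
        then have "G x \<le> 6" by (simp add: eL[OF Tx])
        moreover have "G y \<ge> 7" using eR[OF xy(2) False] Brng[OF cnm[OF xy(2) False]] by simp
        ultimately show ?thesis using xy(3) by simp
      qed
    next
      case Fx: False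
      show ?thesis
      proof (cases "snd y \<le> 2")
        case True
        have "A y \<in> {1..6}" using Arng c2n[OF xy(2) True] by blast
        then have "G y \<le> 6" by (simp add: eL[OF True])
        moreover have "G x \<ge> 7" using eR[OF xy(1) Fx] Brng[OF cnm[OF xy(1) Fx]] by simp
        ultimately show ?thesis using xy(3) by simp
      next
        case False
        then have "B (fst x, snd x - 2) = B (fst y, snd y - 2)" using Fx xy eR by simp
        then have "(fst x, snd x - 2) = (fst y, snd y - 2)" using inj_onD[OF injB] cnm Fx False xy by blast
        then show ?thesis using Fx False by (cases x, cases y) auto
      qed
    qed
  qed
  have img: "G ` cells n = {1..3*n}"
  proof (intro equalityI subsetI)
    fix v assume "v \<in> G ` cells n"
    then obtain x where x: "x \<in> cells n" "v = G x" by auto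
    show "v \<in> {1..3*n}"
    proof (cases "snd x \<le> 2")
      case True then show ?thesis using x eL c2n Arng[of x] n by auto
    next
      case False then show ?thesis using x eR cnm Brng[of "(fst x, snd x - 2)"] n by auto
    qed
  next
    fix v assume v: "v \<in> {1..3*n}"
    show "v \<in> G ` cells n"
    proof (cases "v \<le> 6")
      case True
      then have "v \<in> A ` cells 2" using imA v by auto
      then obtain x where x: "x \<in> cells 2" "v = A x" by auto
      then have "snd x \<le> 2" "x \<in> cells n" unfolding cells_def using n by auto
      then have "G x = v" using x eL by simp
      then show ?thesis using \<open>x \<in> cells n\<close> by blast
    next
      case False
      then have "v - 6 \<in> B ` cells m" using imB v n by auto
      then obtain y where y: "y \<in> cells m" "v - 6 = B y" by auto
      define x where "x = (fst y, snd y + 2)"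
      have "x \<in> cells n" "\<not> snd x \<le> 2" using y n unfolding x_def cells_def by auto
      moreover have "(fst x, snd x - 2) = y" unfolding x_def by simp
      ultimately have "G x = v" using eR y False by simp
      then show ?thesis using \<open>x \<in> cells n\<close> by blast
    qed
  qed
  have zG: "\<forall>c. c \<notin> cells n \<longrightarrow> G c = 0"
  proof (intro allI impI)
    fix x assume x: "x \<notin> cells n"
    show "G x = 0"
    proof (cases "snd x \<le> 2")
      case True
      then have "x \<notin> cells 2" using x n unfolding cells_def by auto
      then have "A x = 0" using zA by blast
      then show ?thesis using eL True by simp
    next
      case False then show ?thesis using x unfolding G_def Gt_def by simp
    qed
  qed
  have rG: "\<forall>a b b'. (a,b) \<in> cells n \<and> (a,b') \<in> cells n \<and> b < b' \<longrightarrow> G (a,b) < G (a,b')"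
  proof (intro allI impI)
    fix a b b' assume h: "(a,b) \<in> cells n \<and> (a,b') \<in> cells n \<and> b < b'"
    show "G (a,b) < G (a,b')"
    proof (cases "b' \<le> 2")
      case True
      then have "(a,b) \<in> cells 2" "(a,b') \<in> cells 2" using h c2n[of "(a,b)"] c2n[of "(a,b')"] by auto
      then show ?thesis using rA h True eL[of "(a,b)"] eL[of "(a,b')"] by simp
    next
      case F: False
      show ?thesis
      proof (cases "b \<le> 2")
        case True
        then have "(a,b) \<in> cells 2" using h c2n[of "(a,b)"] by auto
        then have "G (a,b) \<le> 6" using Arng eL True by fastforce
        moreover have "G (a,b') \<ge> 7" using eR[of "(a,b')"] h F Brng[OF cnm[of "(a,b')"]] by simp
        ultimately show ?thesis by simp
      next
        case False
        have "(a, b-2) \<in> cells m" "(a, b'-2) \<in> cells m" using cnm[of "(a,b)"] cnm[of "(a,b')"] h F False by auto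
        then have "B (a, b-2) < B (a, b'-2)" using rB h False by auto
        then show ?thesis using eR[of "(a,b)"] eR[of "(a,b')"] h F False by simp
      qed
    qed
  qed
  have cG: "\<forall>a a' b. (a,b) \<in> cells n \<and> (a',b) \<in> cells n \<and> a < a' \<longrightarrow> G (a,b) < G (a',b)"
  proof (intro allI impI)
    fix a a' b assume h: "(a,b) \<in> cells n \<and> (a',b) \<in> cells n \<and> a < a'"
    show "G (a,b) < G (a',b)"
    proof (cases "b \<le> 2")
      case True
      then have "(a,b) \<in> cells 2" "(a',b) \<in> cells 2" using h c2n[of "(a,b)"] c2n[of "(a',b)"] by auto
      then show ?thesis using cA h True eL[of "(a,b)"] eL[of "(a',b)"] by simp
    next
      case False
      have "(a, b-2) \<in> cells m" "(a', b-2) \<in> cells m" using cnm[of "(a,b)"] cnm[of "(a',b)"] h False by auto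
      then have "B (a, b-2) < B (a', b-2)" using cB h by auto
      then show ?thesis using eR[of "(a,b)"] eR[of "(a',b)"] h False by simp
    qed
  qed
  have "bij_betw G (cells n) {1..3*n}" unfolding bij_betw_def using inj img by simp
  then have "G \<in> isyt (cells n) (3*n)" using zG rG cG unfolding isyt_def by blast
  then show "Gt n A B \<in> isyt (cells n) (3*n)" by (simp add: G_def)
  have "(1,3) \<in> cells n" using n m unfolding cells_def by auto
  then show "Gt n A B (1,3) = 7" using eR[of "(1,3)"] isyt_11[OF B m] unfolding G_def by simp
  show "Lt (Gt n A B) = A"
  proof
    fix x show "Lt (Gt n A B) x = A x"
    proof (cases "snd x \<le> 2")
      case True then show ?thesis using eL unfolding Lt_def G_def by simp
    next
      case False
      then have "x \<notin> cells 2" unfolding cells_def by auto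
      then have "A x = 0" using zA by blast
      then show ?thesis using False unfolding Lt_def by simp
    qed
  qed
  show "Rt m (Gt n A B) = B"
  proof
    fix x show "Rt m (Gt n A B) x = B x"
    proof (cases "x \<in> cells m")
      case True
      then have "(fst x, snd x + 2) \<in> cells n" using n unfolding cells_def by auto
      moreover have "snd x \<ge> 1" using True unfolding cells_def by auto
      ultimately have "G (fst x, snd x + 2) = B x + 6" using eR[of "(fst x, snd x + 2)"] by simp
      then show ?thesis using True unfolding Rt_def G_def by simp
    next
      case False
      then have "B x = 0" using zB by blast
      then show ?thesis using False unfolding Rt_def by simp
    qed
  qed
qed

lemma card_split:
  assumes n: "n = m + 2" and m: "m \<ge> 1"
  shows "card {T \<in> isyt (cells n) (3*n). T (1,3) = 7} = card (isyt (cells 2) 6) * card (isyt (cells m) (3*m))"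
proof -
  have "bij_betw (\<lambda>T. (Lt T, Rt m T)) {T \<in> isyt (cells n) (3*n). T (1,3) = 7} (isyt (cells 2) 6 \<times> isyt (cells m) (3*m))"
  proof (rule bij_betw_byWitness[where f'="\<lambda>p. Gt n (fst p) (snd p)"])
    show "\<forall>a\<in>{T \<in> isyt (cells n) (3 * n). T (1, 3) = 7}. Gt n (fst (Lt a, Rt m a)) (snd (Lt a, Rt m a)) = a"
    proof
      fix T assume "T \<in> {T \<in> isyt (cells n) (3 * n). T (1, 3) = 7}"
      then have "T \<in> isyt (cells n) (3 * n)" "T (1,3) = 7" by simp_all
      then show "Gt n (fst (Lt T, Rt m T)) (snd (Lt T, Rt m T)) = T" using fwd(3)[OF n m] by simp
    qed
    show "\<forall>a'\<in>isyt (cells 2) 6 \<times> isyt (cells m) (3 * m). (Lt (Gt n (fst a') (snd a')), Rt m (Gt n (fst a') (snd a'))) = a'"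
    proof
      fix p assume "p \<in> isyt (cells 2) 6 \<times> isyt (cells m) (3 * m)"
      then have "fst p \<in> isyt (cells 2) 6" "snd p \<in> isyt (cells m) (3 * m)" by auto
      then show "(Lt (Gt n (fst p) (snd p)), Rt m (Gt n (fst p) (snd p))) = p"
        using bwd(3,4)[OF n m] by (simp add: prod_eq_iff)
    qed
    show "(\<lambda>T. (Lt T, Rt m T)) ` {T \<in> isyt (cells n) (3 * n). T (1, 3) = 7} \<subseteq> isyt (cells 2) 6 \<times> isyt (cells m) (3 * m)"
    proof
      fix q assume "q \<in> (\<lambda>T. (Lt T, Rt m T)) ` {T \<in> isyt (cells n) (3 * n). T (1, 3) = 7}"
      then obtain T where "T \<in> isyt (cells n) (3 * n)" "T (1,3) = 7" "q = (Lt T, Rt m T)" by auto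
      then show "q \<in> isyt (cells 2) 6 \<times> isyt (cells m) (3 * m)" using fwd(1,2)[OF n m] by simp
    qed
    show "(\<lambda>p. Gt n (fst p) (snd p)) ` (isyt (cells 2) 6 \<times> isyt (cells m) (3 * m)) \<subseteq> {T \<in> isyt (cells n) (3 * n). T (1, 3) = 7}"
    proof
      fix q assume "q \<in> (\<lambda>p. Gt n (fst p) (snd p)) ` (isyt (cells 2) 6 \<times> isyt (cells m) (3 * m))"
      then obtain A B where "A \<in> isyt (cells 2) 6" "B \<in> isyt (cells m) (3 * m)" "q = Gt n A B" by auto
      then show "q \<in> {T \<in> isyt (cells n) (3 * n). T (1, 3) = 7}" using bwd(1,2)[OF n m] by simp
    qed
  qed
  then show ?thesis by (simp add: bij_betw_same_card card_cartesian_product)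
qed

lemma card_rect: "int (card (isyt (cells k) (3*k))) * (fact (k+2) * fact (k+1) * fact k) = 2 * fact (3*k)"
proof -
  have k3: "3*k = k+k+k" by simp
  have Yeq: "isyt (cells k) (3*k) = Y k k k" unfolding Y_def cells_shp k3 ..
  have e: "int (card (Y k k k)) * (fact (k+2) * fact (k+1) * fact k) = fact (k+k+k) * 2"
    using Y_card[of k k k] by (simp add: Rf_def)
  have "fact (k+k+k) * 2 = (2::int) * fact (k+k+k)" by simp
  from trans[OF e this] show ?thesis unfolding Yeq unfolding k3 .
qed

lemma card_rect_real: "real (card (isyt (cells k) (3*k))) = 2 * fact (3*k) / (fact (k+2) * fact (k+1) * fact k)"
proof -
  have "real_of_int (int (card (isyt (cells k) (3*k))) * (fact (k+2) * fact (k+1) * fact k)) = real_of_int (2 * fact (3*k))"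
    by (rule arg_cong[OF card_rect])
  then have "real (card (isyt (cells k) (3*k))) * (fact (k+2) * fact (k+1) * fact k) = 2 * fact (3*k)"
    by simp
  moreover have nz: "(fact (k+2) * fact (k+1) * fact k :: real) \<noteq> 0" by simp
  ultimately show ?thesis by (subst nonzero_eq_divide_eq[OF nz])
qed

lemma fact6: "fact (k+6) = (real k+6)*(real k+5)*(real k+4)*(real k+3)*(real k+2)*(real k+1)*(fact k :: real)"
  by (simp add: fact_Suc numeral_eq_Suc algebra_simps)

lemma fact2: "fact (k+2) = (real k+2)*(real k+1)*(fact k :: real)"
  by (simp add: fact_Suc numeral_eq_Suc algebra_simps)

theorem mainTheorem6:
  fixes n :: nat
  assumes "n \<ge> 3"
  shows "measure_pmf.prob (pmf_of_set (syt n)) {T. T (1,3) = 7}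
       = (5 * real n * (real n + 1)^2 * (real n + 2)) /
         (9 * (3 * real n - 1) * (3 * real n - 2) * (3 * real n - 4) * (3 * real n - 5))"
proof -
  define m where "m = n - 2"
  have n: "n = m + 2" and m: "m \<ge> 1" using assms unfolding m_def by auto
  have fin: "finite (syt n)" unfolding syt_isyt cells_def by (rule finite_isyt) simp
  define Q where "Q = real (card (syt n))"
  define P where "P = real (card (isyt (cells m) (3*m)))"
  have Qv: "Q = 2 * fact (3*n) / (fact (n+2) * fact (n+1) * fact n)"
    unfolding Q_def syt_isyt by (rule card_rect_real)
  have Pv: "P = 2 * fact (3*m) / (fact (m+2) * fact (m+1) * fact m)"
    unfolding P_def by (rule card_rect_real)
  have five: "real (card (isyt (cells 2) 6)) = 5"
    using card_rect_real[of 2] by (simp add: fact_numeral)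
  have Qpos: "Q > 0" unfolding Qv by simp
  then have ne: "syt n \<noteq> {}" unfolding Q_def by auto
  have "measure_pmf.prob (pmf_of_set (syt n)) {T. T (1,3) = 7} = card (syt n \<inter> {T. T (1,3) = 7}) / card (syt n)"
    by (rule measure_pmf_of_set[OF ne fin])
  also have "syt n \<inter> {T. T (1,3) = 7} = {T \<in> isyt (cells n) (3*n). T (1,3) = 7}"
    unfolding syt_isyt by auto
  also have "real (card \<dots>) = 5 * P"
    using card_split[OF n m] five unfolding P_def by simp
  finally have pr: "measure_pmf.prob (pmf_of_set (syt n)) {T. T (1,3) = 7} = 5 * P / Q"
    unfolding Q_def .
  define x where "x = real m"
  define X where "X = (fact (3*m) :: real)"
  define F where "F = (fact (m+2) * fact (m+1) * fact m :: real)"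
  have Xp: "X > 0" "F > 0" unfolding X_def F_def by auto
  have e1: "fact (3*n) = (3*x+6)*(3*x+5)*(3*x+4)*(3*x+3)*(3*x+2)*(3*x+1)*X"
  proof -
    have "3*n = 3*m+6" using n by simp
    then show ?thesis unfolding X_def x_def using fact6[of "3*m"] by simp
  qed
  have e2: "fact (n+2) * fact (n+1) * fact n = (x+4)*(x+3)*(x+3)*(x+2)*(x+2)*(x+1) * F"
  proof -
    have a: "fact (n+2) = (x+4)*(x+3)*(fact (m+2)::real)"
      using n fact2[of "m+2"] unfolding x_def by (simp add: algebra_simps)
    have b: "fact (n+1) = (x+3)*(x+2)*(fact (m+1)::real)"
      using n fact2[of "m+1"] unfolding x_def by (simp add: algebra_simps)
    have c: "fact n = (x+2)*(x+1)*(fact m::real)"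
      using n fact2[of "m"] unfolding x_def by (simp add: algebra_simps)
    show ?thesis unfolding a b c F_def by (simp add: algebra_simps)
  qed
  have rn: "real n = x + 2" unfolding x_def using n by simp
  have xp: "x \<ge> 1" unfolding x_def using m by simp
  have PQ: "P / Q = (x+4)*(x+3)*(x+3)*(x+2)*(x+2)*(x+1) / ((3*x+6)*(3*x+5)*(3*x+4)*(3*x+3)*(3*x+2)*(3*x+1))"
  proof -
    define A where "A = (3*x+6)*(3*x+5)*(3*x+4)*(3*x+3)*(3*x+2)*(3*x+1)"
    define B where "B = (x+4)*(x+3)*(x+3)*(x+2)*(x+2)*(x+1)"
    have "A > 0" "B > 0" unfolding A_def B_def using xp by auto
    have "P / Q = (2*X/F) / ((2*(A*X))/(B*F))"
      unfolding Pv Qv e1 e2 F_def[symmetric] X_def[symmetric] A_def B_def by simp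
    also have "\<dots> = B / A" using Xp \<open>A > 0\<close> \<open>B > 0\<close> by (simp add: field_simps)
    finally show ?thesis unfolding A_def B_def .
  qed
  have nz: "3*(x+2) - 1 \<noteq> 0" "3*(x+2) - 2 \<noteq> 0" "3*(x+2) - 4 \<noteq> 0" "3*(x+2) - 5 \<noteq> 0"
    "3*x+6 \<noteq> 0" "3*x+5 \<noteq> 0" "3*x+4 \<noteq> 0" "3*x+3 \<noteq> 0" "3*x+2 \<noteq> 0" "3*x+1 \<noteq> 0"
    "x + 2 \<noteq> 0" "x + 1 \<noteq> 0"
    using xp by auto
  have "5 * P / Q = 5 * (P / Q)" by simp
  also have "\<dots> = (5 * (x+2) * ((x+2) + 1)^2 * ((x+2) + 2)) /
         (9 * (3 * (x+2) - 1) * (3 * (x+2) - 2) * (3 * (x+2) - 4) * (3 * (x+2) - 5))"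
    unfolding PQ
  proof -
    let ?a = "(x+4)*(x+3)*(x+3)*(x+2)*(x+2)*(x+1)"
    let ?b = "(3*x+6)*(3*x+5)*(3*x+4)*(3*x+3)*(3*x+2)*(3*x+1)"
    let ?c = "5 * (x+2) * ((x+2) + 1)^2 * ((x+2) + 2)"
    let ?d = "9 * (3 * (x+2) - 1) * (3 * (x+2) - 2) * (3 * (x+2) - 4) * (3 * (x+2) - 5)"
    have bd: "?b \<noteq> 0" "?d \<noteq> 0" using nz xp by auto
    have "5 * ?a * ?d = ?c * ?b" by algebra
    then have "(5 * ?a) / ?b = ?c / ?d" using bd by (simp add: frac_eq_eq)
    then show "5 * (?a / ?b) = ?c / ?d" by simp
  qed
  finally show ?thesis unfolding pr rn .
qed

end
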